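(* Let $d_{\mathrm{in}},d_{\mathrm{out}}\ge1$, $\lambda\in\mathbb{R}^{d_{\mathrm{in}}}$, $\eta,\alpha,\tau\in\mathbb{R}$, for each $q\in\{0,\dots,d_{\mathrm{out}}-1\}$ a neighborhood set $\mathcal N(q)\subseteq\{0,\dots,d_{\mathrm{out}}-1\}$ and real weights $\omega_{qj}$, $j\in\mathcal N(q)$. Fix $B_{\mathrm{in}}>0$ and let $\mathcal B_{\mathrm{in}}=[-B_{\mathrm{in}},B_{\mathrm{in}}]^{d_{\mathrm{in}}}$. Let $$I_\phi=[-B_{\mathrm{in}}-|\eta|(d_{\mathrm{out}}-1),\,B_{\mathrm{in}}+|\eta|(d_{\mathrm{out}}-1)],\quad M_\phi=\|\phi\|_{L^\infty(I_\phi)},$$ $$B_\omega=\sup_q\sum_{j\in\mathcal N(q)}|\omega_{qj}|,\quad R_{\mathrm{mix}}=1+|\tau|B_\omega,\quad M_s=\|\lambda\|_1M_\phi+|\alpha|(d_{\mathrm{out}}-1),\quad I_\Phi=[-R_{\mathrm{mix}}M_s,\,R_{\mathrm{mix}}M_s].$$ Assume $\phi$ is $C^2$ on a neighborhood of $I_\phi$ and $\Phi$ is $C^2$ on a neighborhood of $I_\Phi$. For $\mathbf z\in\mathcal B_{\mathrm{in}}$ define $s_q(\mathbf z)=\sum_{i=1}^{d_{\mathrm{in}}}\lambda_i\phi(z_i+\eta q)+\alpha q$, $\tilde s_q=s_q+\tau\sum_{j\in\mathcal N(q)}\omega_{qj}s_j$, and $[T(\mathbf z)]_q=\Phi(\tilde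 s_q(\mathbf z))$. Let $\hat\phi$ be the piecewise-linear interpolant of $\phi$ on a uniform grid of $G_\phi\ge2$ knots over $I_\phi$, $\hat\Phi$ the piecewise-linear interpolant of $\Phi$ on a uniform grid of $G_\Phi\ge2$ knots over $I_\Phi$, and $\hat T$ the map defined as $T$ with $(\phi,\Phi)$ replaced by $(\hat\phi,\hat\Phi)$ (same $\lambda,\eta,\alpha,\tau,\omega,\mathcal N$). Put $h_\phi=|I_\phi|/(G_\phi-1)$, $h_\Phi=|I_\Phi|/(G_\Phi-1)$, $M_{\phi''}=\|\phi''\|_{L^\infty(I_\phi)}$, $M_{\Phi''}=\|\Phi''\|_{L^\infty(I_\Phi)}$, $L_\Phi=\|\Phi'\|_{L^\infty(I_\Phi)}$, $\delta_\phi=\frac{M_{\phi''}}8h_\phi^2$, $\delta_\Phi=\frac{M_{\Phi''}}8h_\Phi^2$. Then for all $\mathbf z\in\mathcal B_{\mathrm{in}}$, $$\|T(\mathbf z)-\hat T(\mathbf z)\|_\infty\le L_\Phi R_{\mathrm{mix}}\|\lambda\|_1\delta_\phi+\delta_\Phi\le K_T\max\{h_\phi^2,h_\Phi^2\},\quad K_T=\tfrac18\bigl(L_\Phi R_{\mathrm{mix}}\|\lambda\|_1M_{\phi''}+M_{\Phi''}\bigr).$$ Moreover, if $R:\mathbb{R}^{d_{\mathrm{in}}}\to\mathbb{R}^{d_{\mathrm{out}}}$ is any map and $T_{\mathrm{res}}=T+R$, $\hat T_{\mathrm{res}}=\hat T+R$, the same bounds hold for $\|T_{\mathrm{res}}(\mathbf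 z)-\hat T_{\mathrm{res}}(\mathbf z)\|_\infty$.
   Context: This describes a single Sprecher block with optional lateral mixing: the output channels are indexed $q=0,\dots,d_{\mathrm{out}}-1$, $\|\lambda\|_1=\sum_i|\lambda_i|$, and $|I|$ denotes the length of an interval $I$. *)

theory Defs
  imports "HOL-Analysis.Analysis"
begin

text \<open>Vectors in R^d are modelled as functions nat => real, indices 0..d-1.\<close>

definition C2_near :: "(real \<Rightarrow> real) \<Rightarrow> real set \<Rightarrow> bool" where
  "C2_near f S \<longleftrightarrow> (\<exists>U. open U \<and> S \<subseteq> U \<and>
      (\<forall>x\<in>U. f differentiable (at x)) \<and>
      (\<forall>x\<in>U. deriv f differentiable (at x)) \<and>
      continuous_on U (deriv (deriv f)))"

definition sup_abs :: "(real \<Rightarrow> real) \<Rightarrow> real \<Rightarrow> real \<Rightarrow> real" where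
  "sup_abs f a b = (SUP x\<in>{a..b}. \<bar>f x\<bar>)"

definition pl_interp :: "(real \<Rightarrow> real) \<Rightarrow> real \<Rightarrow> real \<Rightarrow> nat \<Rightarrow> real \<Rightarrow> real" where
  "pl_interp f a b G x =
     (let h = (b - a) / (real G - 1);
          k = min (nat \<lfloor>(x - a) / h\<rfloor>) (G - 2);
          t = (x - a) / h - real k
      in (1 - t) * f (a + real k * h) + t * f (a + real (k + 1) * h))"

definition sprecher_s ::
  "(real \<Rightarrow> real) \<Rightarrow> (nat \<Rightarrow> real) \<Rightarrow> real \<Rightarrow> real \<Rightarrow> nat \<Rightarrow> (nat \<Rightarrow> real) \<Rightarrow> nat \<Rightarrow> real" where
  "sprecher_s phi lam eta alpha din z q =
     (\<Sum>i<din. lam i * phi (z i + eta * real q)) + alpha * real q"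

definition sprecher_stilde ::
  "(real \<Rightarrow> real) \<Rightarrow> (nat \<Rightarrow> real) \<Rightarrow> real \<Rightarrow> real \<Rightarrow> real \<Rightarrow> (nat \<Rightarrow> nat \<Rightarrow> real)
   \<Rightarrow> (nat \<Rightarrow> nat set) \<Rightarrow> nat \<Rightarrow> (nat \<Rightarrow> real) \<Rightarrow> nat \<Rightarrow> real" where
  "sprecher_stilde phi lam eta alpha tau omega N din z q =
     sprecher_s phi lam eta alpha din z q
     + tau * (\<Sum>j\<in>N q. omega q j * sprecher_s phi lam eta alpha din z j)"

definition sprecher_T ::
  "(real \<Rightarrow> real) \<Rightarrow> (real \<Rightarrow> real) \<Rightarrow> (nat \<Rightarrow> real) \<Rightarrow> real \<Rightarrow> real \<Rightarrow> real
   \<Rightarrow> (nat \<Rightarrow> nat \<Rightarrow> real) \<Rightarrow> (nat \<Rightarrow> nat set) \<Rightarrow> nat \<Rightarrow> (nat \<Rightarrow> real) \<Rightarrow> nat \<Rightarrow> real" where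
  "sprecher_T phi Phi lam eta alpha tau omega N din z q =
     Phi (sprecher_stilde phi lam eta alpha tau omega N din z q)"

definition vec_inf_norm :: "nat \<Rightarrow> (nat \<Rightarrow> real) \<Rightarrow> real" where
  "vec_inf_norm d v = Max ((\<lambda>q. \<bar>v q\<bar>) ` {..<d})"

end

theory Submission
  imports Defs
begin


lemma C2_facts:
  assumes "C2_near f {a..b}"
  shows "\<forall>x\<in>{a..b}. DERIV f x :> deriv f x"
    and "\<forall>x\<in>{a..b}. DERIV (deriv f) x :> deriv (deriv f) x"
    and "continuous_on {a..b} f"
    and "continuous_on {a..b} (deriv f)"
    and "continuous_on {a..b} (deriv (deriv f))"
proof -
  obtain U where U: "open U" "{a..b} \<subseteq> U" "\<forall>x\<in>U. f differentiable (at x)"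
     "\<forall>x\<in>U. deriv f differentiable (at x)" "continuous_on U (deriv (deriv f))"
    using assms unfolding C2_near_def by blast
  show "\<forall>x\<in>{a..b}. DERIV f x :> deriv f x"
    using U DERIV_deriv_iff_real_differentiable by blast
  show "\<forall>x\<in>{a..b}. DERIV (deriv f) x :> deriv (deriv f) x"
    using U DERIV_deriv_iff_real_differentiable by blast
  show "continuous_on {a..b} f"
    using U by (meson continuous_at_imp_continuous_on differentiable_imp_continuous_within subsetD)
  show "continuous_on {a..b} (deriv f)"
    using U by (meson continuous_at_imp_continuous_on differentiable_imp_continuous_within subsetD)
  show "continuous_on {a..b} (deriv (deriv f))"
    using U continuous_on_subset by blast
qed

lemma sup_abs_ge:
  assumes "continuous_on {a..b} g" "x \<in> {a..b}"
  shows "\<bar>g x\<bar> \<le> sup_abs g a b"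
proof -
  have "continuous_on {a..b} (\<lambda>x. \<bar>g x\<bar>)" using assms(1) by (intro continuous_intros)
  then have "compact ((\<lambda>x. \<bar>g x\<bar>) ` {a..b})" by (intro compact_continuous_image) auto
  then have "bdd_above ((\<lambda>x. \<bar>g x\<bar>) ` {a..b})" by (intro bounded_imp_bdd_above compact_imp_bounded)
  then show ?thesis unfolding sup_abs_def using assms(2) by (intro cSUP_upper) auto
qed

lemma sup_abs_nonneg:
  assumes "continuous_on {a..b} g" "a \<le> b"
  shows "0 \<le> sup_abs g a b"
  using sup_abs_ge[OF assms(1), of a] assms(2) by auto

lemma taylor2:
  fixes f :: "real \<Rightarrow> real" and a b :: real
  assumes d1: "\<forall>x\<in>{a..b}. DERIV f x :> deriv f x"
    and d2: "\<forall>x\<in>{a..b}. DERIV (deriv f) x :> deriv (deriv f) x"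
    and x: "x \<in> {a..b}" and y: "y \<in> {a..b}"
  shows "\<exists>\<xi>\<in>{a..b}. f y = f x + deriv f x * (y - x) + deriv (deriv f) \<xi> / 2 * (y - x)^2"
proof (cases "y = x")
  case True then show ?thesis using x by auto
next
  case False
  define diff where "diff = (\<lambda>m::nat. if m = 0 then f else if m = 1 then deriv f else deriv (deriv f))"
  have "\<exists>t. (if y < x then y < t \<and> t < x else x < t \<and> t < y) \<and>
    f y = (\<Sum>m<2. (diff m x / fact m) * (y - x)^m) + (diff 2 t / fact 2) * (y - x)^2"
  proof (rule Taylor[where a=a and b=b])
    show "\<forall>m t. m < 2 \<and> a \<le> t \<and> t \<le> b \<longrightarrow> DERIV (diff m) t :> diff (Suc m) t"
    proof (intro allI impI)
      fix m :: nat and t assume "m < 2 \<and> a \<le> t \<and> t \<le> b"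
      then have "m = 0 \<or> m = 1" "t \<in> {a..b}" by auto
      then show "DERIV (diff m) t :> diff (Suc m) t" using d1 d2 unfolding diff_def by auto
    qed
  qed (use x y False in \<open>auto simp: diff_def\<close>)
  then obtain t where t: "(if y < x then y < t \<and> t < x else x < t \<and> t < y)"
    "f y = (\<Sum>m<2. (diff m x / fact m) * (y - x)^m) + (diff 2 t / fact 2) * (y - x)^2" by blast
  have "t \<in> {a..b}" using t(1) x y by (auto split: if_splits)
  moreover have "f y = f x + deriv f x * (y - x) + deriv (deriv f) t / 2 * (y - x)^2"
    using t(2) by (simp add: diff_def numeral_2_eq_2)
  ultimately show ?thesis by blast
qed

lemma pl_struct:
  fixes f :: "real \<Rightarrow> real" and a b x :: real
  assumes ab: "a \<le> b" and G: "G \<ge> 2" and x: "x \<in> {a..b}"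
  shows "\<exists>u t. pl_interp f a b G x = (1-t) * f u + t * f (u + (b-a)/(real G - 1))
     \<and> x = u + t * ((b-a)/(real G - 1)) \<and> a \<le> u \<and> u + (b-a)/(real G - 1) \<le> b \<and> 0 \<le> t \<and> t \<le> 1"
proof (cases "a = b")
  case True
  then show ?thesis using x unfolding pl_interp_def Let_def
    by (intro exI[of _ a] exI[of _ 0]) auto
next
  case False
  define h where "h = (b-a)/(real G - 1)"
  have G1: "real G - 1 > 0" using G by auto
  have h: "h > 0" using False ab G1 unfolding h_def by auto
  have bh: "b = a + (real G - 1) * h" using G1 unfolding h_def by auto
  define y where "y = (x - a) / h"
  have y0: "y \<ge> 0" using x h unfolding y_def by auto
  have yG: "y \<le> real G - 1" using x h bh unfolding y_def by (auto simp: field_simps)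
  define k where "k = min (nat \<lfloor>y\<rfloor>) (G - 2)"
  define t where "t = y - real k"
  have eq: "pl_interp f a b G x = (1 - t) * f (a + real k * h) + t * f (a + real (k + 1) * h)"
    unfolding pl_interp_def Let_def h_def[symmetric] y_def[symmetric] k_def[symmetric] t_def[symmetric] by simp
  have fl: "real (nat \<lfloor>y\<rfloor>) = of_int \<lfloor>y\<rfloor>" using y0 by simp
  have kt: "0 \<le> t \<and> t \<le> 1 \<and> real k + 1 \<le> real G - 1"
  proof (cases "nat \<lfloor>y\<rfloor> \<le> G - 2")
    case True
    then have "k = nat \<lfloor>y\<rfloor>" unfolding k_def by simp
    moreover have "real (nat \<lfloor>y\<rfloor>) \<le> real G - 2" using True G by linarith
    ultimately show ?thesis unfolding t_def using fl
      by (smt (verit, ccfv_SIG) of_int_floor_le real_of_int_floor_add_one_gt)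
  next
    case False
    then have k: "k = G - 2" unfolding k_def by simp
    have "of_int \<lfloor>y\<rfloor> \<ge> real G - 1" using False G fl by linarith
    then have "y = real G - 1" using yG by (smt (verit) of_int_floor_le)
    then show ?thesis unfolding t_def k using G by (simp add: of_nat_diff)
  qed
  have e1: "pl_interp f a b G x = (1-t) * f (a + real k * h) + t * f (a + real k * h + (b-a)/(real G - 1))"
    using eq unfolding h_def[symmetric] by (simp add: algebra_simps)
  have e2: "x = a + real k * h + t * ((b - a) / (real G - 1))"
    unfolding h_def[symmetric] t_def y_def using h by (simp add: field_simps)
  have e3: "a \<le> a + real k * h" using h by simp
  have "real k * h + h \<le> (real G - 1) * h" using kt h by (metis distrib_right mult_1 mult_right_mono less_imp_le)
  then have e4: "a + real k * h + (b - a) / (real G - 1) \<le> b"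
    unfolding h_def[symmetric] using bh by linarith
  show ?thesis using e1 e2 e3 e4 kt by blast
qed


lemma interp_err:
  fixes f :: "real \<Rightarrow> real" and a b x :: real
  assumes ab: "a \<le> b" and G: "G \<ge> 2" and x: "x \<in> {a..b}" and C2: "C2_near f {a..b}"
  shows "\<bar>f x - pl_interp f a b G x\<bar> \<le> sup_abs (deriv (deriv f)) a b / 8 * ((b-a)/(real G - 1))^2"
proof -
  define h where "h = (b-a)/(real G - 1)"
  define M where "M = sup_abs (deriv (deriv f)) a b"
  have h0: "h \<ge> 0" using ab G unfolding h_def by auto
  note C = C2_facts[OF C2]
  have Mb: "\<And>y. y \<in> {a..b} \<Longrightarrow> \<bar>deriv (deriv f) y\<bar> \<le> M"
    unfolding M_def by (rule sup_abs_ge[OF C(5)])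
  obtain u t where ut: "pl_interp f a b G x = (1-t) * f u + t * f (u + h)"
     "x = u + t * h" "a \<le> u" "u + h \<le> b" "0 \<le> t" "t \<le> 1"
    using pl_struct[OF ab G x, of f] unfolding h_def[symmetric] by blast
  have uI: "u \<in> {a..b}" and vI: "u + h \<in> {a..b}" using ut h0 by auto
  obtain c1 where c1: "c1 \<in> {a..b}" "f u = f x + deriv f x * (u - x) + deriv (deriv f) c1 / 2 * (u - x)^2"
    using taylor2[OF C(1) C(2) x uI] by blast
  obtain c2 where c2: "c2 \<in> {a..b}" "f (u+h) = f x + deriv f x * (u + h - x) + deriv (deriv f) c2 / 2 * (u + h - x)^2"
    using taylor2[OF C(1) C(2) x vI] by blast
  have "pl_interp f a b G x - f x = (1-t) * (f u - f x) + t * (f (u+h) - f x)"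
    using ut(1) by (simp add: algebra_simps)
  also have "\<dots> = (1-t) * t * h^2 / 2 * (deriv (deriv f) c1 * t + deriv (deriv f) c2 * (1 - t))"
  proof -
    have d1: "u - x = - (t * h)" and d2: "u + h - x = (1 - t) * h" using ut(2) by (auto simp: algebra_simps)
    show ?thesis unfolding c1(2) c2(2) d1 d2 by (simp add: power2_eq_square field_simps)
  qed
  finally have eq: "pl_interp f a b G x - f x = (1-t) * t * h^2 / 2 * (deriv (deriv f) c1 * t + deriv (deriv f) c2 * (1 - t))" .
  have nn: "(1-t) * t * h^2 / 2 \<ge> 0" using ut by auto
  have "\<bar>deriv (deriv f) c1 * t + deriv (deriv f) c2 * (1 - t)\<bar> \<le> M * t + M * (1 - t)"
  proof -
    have "\<bar>deriv (deriv f) c1 * t\<bar> \<le> M * t" using Mb[OF c1(1)] ut by (simp add: abs_mult mult_right_mono)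
    moreover have "\<bar>deriv (deriv f) c2 * (1-t)\<bar> \<le> M * (1-t)" using Mb[OF c2(1)] ut by (simp add: abs_mult mult_right_mono)
    ultimately show ?thesis by linarith
  qed
  then have "\<bar>deriv (deriv f) c1 * t + deriv (deriv f) c2 * (1 - t)\<bar> \<le> M" by (simp add: algebra_simps)
  then have "\<bar>pl_interp f a b G x - f x\<bar> \<le> (1-t) * t * h^2 / 2 * M"
    unfolding eq abs_mult using nn by (simp add: mult_left_mono)
  also have "\<dots> \<le> M / 8 * h^2"
  proof -
    have M0: "M \<ge> 0" using Mb[OF c1(1)] by linarith
    have "(1-t) * t = 1/4 - (t - 1/2)^2" by (simp add: power2_eq_square algebra_simps)
    then have "(1-t) * t \<le> 1/4" by (smt (verit) zero_le_power2)
    then have "(1-t) * t * (h^2 * M) \<le> 1/4 * (h^2 * M)" using M0 by (intro mult_right_mono) auto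
    then show ?thesis by (simp add: algebra_simps)
  qed
  finally have "\<bar>pl_interp f a b G x - f x\<bar> \<le> M / 8 * h^2" .
  then show ?thesis unfolding M_def h_def by (metis abs_minus_commute)
qed

lemma pl_bound:
  fixes f :: "real \<Rightarrow> real" and a b x :: real
  assumes ab: "a \<le> b" and G: "G \<ge> 2" and x: "x \<in> {a..b}" and fc: "continuous_on {a..b} f"
  shows "\<bar>pl_interp f a b G x\<bar> \<le> sup_abs f a b"
proof -
  define h where "h = (b-a)/(real G - 1)"
  have h0: "h \<ge> 0" using ab G unfolding h_def by auto
  obtain u t where ut: "pl_interp f a b G x = (1-t) * f u + t * f (u + h)"
     "x = u + t * h" "a \<le> u" "u + h \<le> b" "0 \<le> t" "t \<le> 1"
    using pl_struct[OF ab G x, of f] unfolding h_def[symmetric] by blast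
  have "\<bar>f u\<bar> \<le> sup_abs f a b" "\<bar>f (u+h)\<bar> \<le> sup_abs f a b"
    using ut h0 by (auto intro!: sup_abs_ge[OF fc])
  then have "\<bar>(1-t) * f u\<bar> \<le> (1-t) * sup_abs f a b" "\<bar>t * f (u+h)\<bar> \<le> t * sup_abs f a b"
    using ut by (auto simp: abs_mult intro: mult_left_mono)
  moreover have "\<bar>(1-t) * f u + t * f (u+h)\<bar> \<le> \<bar>(1-t) * f u\<bar> + \<bar>t * f (u+h)\<bar>" by (rule abs_triangle_ineq)
  ultimately show ?thesis unfolding ut(1) by (simp add: algebra_simps)
qed

lemma lip_bound:
  fixes f :: "real \<Rightarrow> real" and a b x y :: real
  assumes d1: "\<forall>x\<in>{a..b}. DERIV f x :> deriv f x" and dc: "continuous_on {a..b} (deriv f)"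
    and x: "x \<in> {a..b}" and y: "y \<in> {a..b}"
  shows "\<bar>f x - f y\<bar> \<le> sup_abs (deriv f) a b * \<bar>x - y\<bar>"
proof -
  have gen: "\<bar>f q - f p\<bar> \<le> sup_abs (deriv f) a b * \<bar>q - p\<bar>" if pq: "p < q" "p \<in> {a..b}" "q \<in> {a..b}" for p q
  proof -
    obtain z where z: "p < z" "z < q" "f q - f p = (q - p) * deriv f z"
      using MVT2[OF pq(1), of f "deriv f"] d1 pq by auto
    have "\<bar>deriv f z\<bar> \<le> sup_abs (deriv f) a b" using z pq by (intro sup_abs_ge[OF dc]) auto
    then show ?thesis unfolding z(3) abs_mult by (metis abs_ge_zero mult.commute mult_right_mono)
  qed
  consider "x < y" | "y < x" | "x = y" by linarith
  then show ?thesis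
  proof cases
    case 1 then show ?thesis using gen[of x y] x y by (metis abs_minus_commute)
  next
    case 2 then show ?thesis using gen[of y x] x y by (metis abs_minus_commute)
  qed simp
qed

lemma sum_bound:
  fixes c g :: "nat \<Rightarrow> real"
  assumes "\<And>i. i \<in> A \<Longrightarrow> \<bar>g i\<bar> \<le> K"
  shows "\<bar>\<Sum>i\<in>A. c i * g i\<bar> \<le> (\<Sum>i\<in>A. \<bar>c i\<bar>) * K"
proof -
  have "\<bar>\<Sum>i\<in>A. c i * g i\<bar> \<le> (\<Sum>i\<in>A. \<bar>c i * g i\<bar>)" by (rule sum_abs)
  also have "\<dots> \<le> (\<Sum>i\<in>A. \<bar>c i\<bar> * K)"
    using assms by (intro sum_mono) (simp add: abs_mult mult_left_mono)
  finally show ?thesis by (simp add: sum_distrib_right)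
qed


lemma mix_bound:
  fixes g w :: "nat \<Rightarrow> real"
  assumes "finite A" "\<And>j. j \<in> A \<Longrightarrow> \<bar>g j\<bar> \<le> K" "\<bar>g0\<bar> \<le> K" "(\<Sum>j\<in>A. \<bar>w j\<bar>) \<le> B" "K \<ge> 0"
  shows "\<bar>g0 + tau * (\<Sum>j\<in>A. w j * g j)\<bar> \<le> (1 + \<bar>tau\<bar> * B) * K"
proof -
  have "\<bar>\<Sum>j\<in>A. w j * g j\<bar> \<le> (\<Sum>j\<in>A. \<bar>w j\<bar>) * K" by (rule sum_bound) (use assms in auto)
  also have "\<dots> \<le> B * K" using assms by (intro mult_right_mono) auto
  finally have "\<bar>tau * (\<Sum>j\<in>A. w j * g j)\<bar> \<le> \<bar>tau\<bar> * (B * K)"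
    unfolding abs_mult by (intro mult_left_mono) auto
  moreover have "\<bar>g0 + tau * (\<Sum>j\<in>A. w j * g j)\<bar> \<le> \<bar>g0\<bar> + \<bar>tau * (\<Sum>j\<in>A. w j * g j)\<bar>" by (rule abs_triangle_ineq)
  ultimately show ?thesis using assms(3) by (simp add: algebra_simps)
qed

theorem mainTheorem2:
  fixes din dout Gphi GPhi :: nat
    and lam :: "nat \<Rightarrow> real"
    and eta alpha tau Bin :: real
    and N :: "nat \<Rightarrow> nat set"
    and omega :: "nat \<Rightarrow> nat \<Rightarrow> real"
    and phi Phi :: "real \<Rightarrow> real"
    and R :: "(nat \<Rightarrow> real) \<Rightarrow> (nat \<Rightarrow> real)"
  assumes din: "din \<ge> 1" and dout: "dout \<ge> 1"
    and N_sub: "\<forall>q<dout. N q \<subseteq> {..<dout}"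
    and Bin_pos: "Bin > 0"
    and Gphi: "Gphi \<ge> 2" and GPhi: "GPhi \<ge> 2"
  defines "aphi \<equiv> Bin + \<bar>eta\<bar> * (real dout - 1)"
  defines "lam1 \<equiv> (\<Sum>i<din. \<bar>lam i\<bar>)"
  defines "Mphi \<equiv> sup_abs phi (- aphi) aphi"
  defines "Bomega \<equiv> Max ((\<lambda>q. \<Sum>j\<in>N q. \<bar>omega q j\<bar>) ` {..<dout})"
  defines "Rmix \<equiv> 1 + \<bar>tau\<bar> * Bomega"
  defines "Ms \<equiv> lam1 * Mphi + \<bar>alpha\<bar> * (real dout - 1)"
  defines "aPhi \<equiv> Rmix * Ms"
  defines "hphi \<equiv> (2 * aphi) / (real Gphi - 1)"
  defines "hPhi \<equiv> (2 * aPhi) / (real GPhi - 1)"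
  defines "Mphi2 \<equiv> sup_abs (deriv (deriv phi)) (- aphi) aphi"
  defines "MPhi2 \<equiv> sup_abs (deriv (deriv Phi)) (- aPhi) aPhi"
  defines "LPhi \<equiv> sup_abs (deriv Phi) (- aPhi) aPhi"
  defines "dphi \<equiv> Mphi2 / 8 * hphi ^ 2"
  defines "dPhi \<equiv> MPhi2 / 8 * hPhi ^ 2"
  defines "KT \<equiv> (LPhi * Rmix * lam1 * Mphi2 + MPhi2) / 8"
  defines "T \<equiv> sprecher_T phi Phi lam eta alpha tau omega N din"
  defines "That \<equiv> sprecher_T (pl_interp phi (- aphi) aphi Gphi)
                  (pl_interp Phi (- aPhi) aPhi GPhi) lam eta alpha tau omega N din"
  assumes phi_C2: "C2_near phi {- aphi..aphi}"
    and Phi_C2: "C2_near Phi {- aPhi..aPhi}"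
  shows "\<forall>z. (\<forall>i<din. \<bar>z i\<bar> \<le> Bin) \<longrightarrow>
           vec_inf_norm dout (\<lambda>q. T z q - That z q) \<le> LPhi * Rmix * lam1 * dphi + dPhi
         \<and> LPhi * Rmix * lam1 * dphi + dPhi \<le> KT * max (hphi ^ 2) (hPhi ^ 2)
         \<and> vec_inf_norm dout (\<lambda>q. (T z q + R z q) - (That z q + R z q))
              \<le> LPhi * Rmix * lam1 * dphi + dPhi"
proof -
  have q0: "\<bar>eta\<bar> * (real dout - 1) \<ge> 0" using dout by simp
  have aphi_pos: "aphi > 0" unfolding aphi_def using q0 Bin_pos by linarith
  note Cp = C2_facts[OF phi_C2]
  note CP = C2_facts[OF Phi_C2]
  define phih where "phih = pl_interp phi (- aphi) aphi Gphi"
  define Phih where "Phih = pl_interp Phi (- aPhi) aPhi GPhi"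
  have phi_b: "\<And>y. y \<in> {-aphi..aphi} \<Longrightarrow> \<bar>phi y\<bar> \<le> Mphi"
    unfolding Mphi_def by (rule sup_abs_ge[OF Cp(3)])
  have phih_b: "\<And>y. y \<in> {-aphi..aphi} \<Longrightarrow> \<bar>phih y\<bar> \<le> Mphi"
    unfolding Mphi_def phih_def using aphi_pos by (intro pl_bound[OF _ Gphi _ Cp(3)]) auto
  have hphi': "hphi = (aphi - - aphi) / (real Gphi - 1)" unfolding hphi_def by simp
  have phi_e: "\<And>y. y \<in> {-aphi..aphi} \<Longrightarrow> \<bar>phi y - phih y\<bar> \<le> dphi"
    unfolding dphi_def Mphi2_def phih_def hphi' using aphi_pos by (intro interp_err[OF _ Gphi _ phi_C2]) auto
  have Mphi0: "Mphi \<ge> 0" unfolding Mphi_def using aphi_pos by (intro sup_abs_nonneg[OF Cp(3)]) auto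
  have Mphi20: "Mphi2 \<ge> 0" unfolding Mphi2_def using aphi_pos by (intro sup_abs_nonneg[OF Cp(5)]) auto
  have lam10: "lam1 \<ge> 0" unfolding lam1_def by (simp add: sum_nonneg)
  have dphi0: "dphi \<ge> 0" unfolding dphi_def using Mphi20 by simp
  have Bom: "\<And>q. q < dout \<Longrightarrow> (\<Sum>j\<in>N q. \<bar>omega q j\<bar>) \<le> Bomega" unfolding Bomega_def by (intro Max_ge) auto
  have Bomega0: "Bomega \<ge> 0"
  proof -
    have "0 \<le> (\<Sum>j\<in>N 0. \<bar>omega 0 j\<bar>)" by (simp add: sum_nonneg)
    also have "\<dots> \<le> Bomega" using Bom[of 0] dout by simp
    finally show ?thesis .
  qed
  have Rmix1: "Rmix \<ge> 1" unfolding Rmix_def using Bomega0 by simp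
  have Ms0: "Ms \<ge> 0" unfolding Ms_def using lam10 Mphi0 dout by simp
  have aPhi0: "aPhi \<ge> 0" unfolding aPhi_def using Rmix1 Ms0 by simp
  have LPhi0: "LPhi \<ge> 0" unfolding LPhi_def using aPhi0 by (intro sup_abs_nonneg[OF CP(4)]) auto
  have MPhi20: "MPhi2 \<ge> 0" unfolding MPhi2_def using aPhi0 by (intro sup_abs_nonneg[OF CP(5)]) auto
  have hPhi': "hPhi = (aPhi - - aPhi) / (real GPhi - 1)" unfolding hPhi_def by simp
  have Phi_e: "\<And>y. y \<in> {-aPhi..aPhi} \<Longrightarrow> \<bar>Phi y - Phih y\<bar> \<le> dPhi"
    unfolding dPhi_def MPhi2_def Phih_def hPhi' using aPhi0 by (intro interp_err[OF _ GPhi _ Phi_C2]) auto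
  have Phi_l: "\<And>x y. x \<in> {-aPhi..aPhi} \<Longrightarrow> y \<in> {-aPhi..aPhi} \<Longrightarrow> \<bar>Phi x - Phi y\<bar> \<le> LPhi * \<bar>x - y\<bar>"
    unfolding LPhi_def by (rule lip_bound[OF CP(1) CP(4)])
  have claim2: "LPhi * Rmix * lam1 * dphi + dPhi \<le> KT * max (hphi ^ 2) (hPhi ^ 2)"
  proof -
    have "LPhi * Rmix * lam1 * dphi = (LPhi * Rmix * lam1 * Mphi2 / 8) * hphi^2" unfolding dphi_def by simp
    also have "\<dots> \<le> (LPhi * Rmix * lam1 * Mphi2 / 8) * max (hphi ^ 2) (hPhi ^ 2)"
      using LPhi0 Rmix1 lam10 Mphi20 by (intro mult_left_mono) auto
    finally have A: "LPhi * Rmix * lam1 * dphi \<le> (LPhi * Rmix * lam1 * Mphi2 / 8) * max (hphi ^ 2) (hPhi ^ 2)" .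
    have B: "dPhi \<le> (MPhi2 / 8) * max (hphi ^ 2) (hPhi ^ 2)" unfolding dPhi_def
      using MPhi20 by (intro mult_left_mono) auto
    show ?thesis using A B unfolding KT_def by (simp add: algebra_simps add_divide_distrib)
  qed
  show ?thesis
  proof (intro allI impI)
    fix z :: "nat \<Rightarrow> real"
    assume zb: "\<forall>i<din. \<bar>z i\<bar> \<le> Bin"
    have arg: "z i + eta * real q \<in> {-aphi..aphi}" if "q < dout" "i < din" for q i
    proof -
      have "real q \<le> real dout - 1" using that by linarith
      then have "\<bar>eta * real q\<bar> \<le> \<bar>eta\<bar> * (real dout - 1)" unfolding abs_mult by (intro mult_left_mono) auto
      moreover have "\<bar>z i + eta * real q\<bar> \<le> \<bar>z i\<bar> + \<bar>eta * real q\<bar>" by (rule abs_triangle_ineq)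
      ultimately show ?thesis using zb that unfolding aphi_def by auto
    qed
    have aq: "\<bar>alpha * real q\<bar> \<le> \<bar>alpha\<bar> * (real dout - 1)" if "q < dout" for q
    proof -
      have "real q \<le> real dout - 1" using that by linarith
      then show ?thesis unfolding abs_mult by (intro mult_left_mono) auto
    qed
    define S where "S = sprecher_s phi lam eta alpha din z"
    define Sh where "Sh = sprecher_s phih lam eta alpha din z"
    have S_b: "\<bar>S q\<bar> \<le> Ms" if "q < dout" for q
    proof -
      have "\<bar>\<Sum>i<din. lam i * phi (z i + eta * real q)\<bar> \<le> lam1 * Mphi"
        unfolding lam1_def by (rule sum_bound) (use phi_b arg that in auto)
      then show ?thesis unfolding S_def sprecher_s_def Ms_def using aq[OF that] by (smt (verit) abs_triangle_ineq)
    qed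
    have Sh_b: "\<bar>Sh q\<bar> \<le> Ms" if "q < dout" for q
    proof -
      have "\<bar>\<Sum>i<din. lam i * phih (z i + eta * real q)\<bar> \<le> lam1 * Mphi"
        unfolding lam1_def by (rule sum_bound) (use phih_b arg that in auto)
      then show ?thesis unfolding Sh_def sprecher_s_def Ms_def using aq[OF that] by (smt (verit) abs_triangle_ineq)
    qed
    have S_e: "\<bar>S q - Sh q\<bar> \<le> lam1 * dphi" if "q < dout" for q
    proof -
      have "S q - Sh q = (\<Sum>i<din. lam i * (phi (z i + eta * real q) - phih (z i + eta * real q)))"
        unfolding S_def Sh_def sprecher_s_def by (simp add: sum_subtractf right_diff_distrib)
      also have "\<bar>\<dots>\<bar> \<le> lam1 * dphi"
        unfolding lam1_def by (rule sum_bound) (use phi_e arg that in auto)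
      finally show ?thesis .
    qed
    have St: "sprecher_stilde phi lam eta alpha tau omega N din z q = S q + tau * (\<Sum>j\<in>N q. omega q j * S j)" for q
      unfolding sprecher_stilde_def S_def by simp
    have Sth: "sprecher_stilde phih lam eta alpha tau omega N din z q = Sh q + tau * (\<Sum>j\<in>N q. omega q j * Sh j)" for q
      unfolding sprecher_stilde_def Sh_def by simp
    have fin: "finite (N q)" if "q < dout" for q using N_sub that finite_subset by blast
    have comp: "\<bar>T z q - That z q\<bar> \<le> LPhi * Rmix * lam1 * dphi + dPhi" if q: "q < dout" for q
    proof -
      define x where "x = S q + tau * (\<Sum>j\<in>N q. omega q j * S j)"
      define y where "y = Sh q + tau * (\<Sum>j\<in>N q. omega q j * Sh j)"
      have TT: "T z q - That z q = Phi x - Phih y"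
        unfolding T_def That_def sprecher_T_def phih_def[symmetric] Phih_def[symmetric] St Sth x_def y_def by simp
      have xI: "x \<in> {-aPhi..aPhi}"
      proof -
        have "\<bar>x\<bar> \<le> (1 + \<bar>tau\<bar> * Bomega) * Ms" unfolding x_def
          by (rule mix_bound[OF fin[OF q]]) (use S_b N_sub q Bom Ms0 in auto)
        then show ?thesis unfolding aPhi_def Rmix_def by auto
      qed
      have yI: "y \<in> {-aPhi..aPhi}"
      proof -
        have "\<bar>y\<bar> \<le> (1 + \<bar>tau\<bar> * Bomega) * Ms" unfolding y_def
          by (rule mix_bound[OF fin[OF q]]) (use Sh_b N_sub q Bom Ms0 in auto)
        then show ?thesis unfolding aPhi_def Rmix_def by auto
      qed
      have xy: "\<bar>x - y\<bar> \<le> Rmix * (lam1 * dphi)"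
      proof -
        have "x - y = (S q - Sh q) + tau * (\<Sum>j\<in>N q. omega q j * (S j - Sh j))"
          unfolding x_def y_def by (simp add: sum_subtractf right_diff_distrib algebra_simps)
        also have "\<bar>\<dots>\<bar> \<le> (1 + \<bar>tau\<bar> * Bomega) * (lam1 * dphi)"
          by (rule mix_bound[OF fin[OF q]]) (use S_e N_sub q Bom lam10 dphi0 in auto)
        finally show ?thesis unfolding Rmix_def .
      qed
      have "\<bar>Phi x - Phih y\<bar> \<le> \<bar>Phi x - Phi y\<bar> + \<bar>Phi y - Phih y\<bar>" using abs_triangle_ineq[of "Phi x - Phi y" "Phi y - Phih y"] by simp
      also have "\<dots> \<le> LPhi * \<bar>x - y\<bar> + dPhi" using Phi_l[OF xI yI] Phi_e[OF yI] by linarith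
      also have "\<dots> \<le> LPhi * (Rmix * (lam1 * dphi)) + dPhi" using xy LPhi0 by (simp add: mult_left_mono)
      finally show ?thesis unfolding TT by (simp add: algebra_simps)
    qed
    have vn: "vec_inf_norm dout (\<lambda>q. T z q - That z q) \<le> LPhi * Rmix * lam1 * dphi + dPhi"
      unfolding vec_inf_norm_def using dout comp by (subst Max_le_iff) (auto simp: lessThan_empty_iff)
    show "vec_inf_norm dout (\<lambda>q. T z q - That z q) \<le> LPhi * Rmix * lam1 * dphi + dPhi
         \<and> LPhi * Rmix * lam1 * dphi + dPhi \<le> KT * max (hphi ^ 2) (hPhi ^ 2)
         \<and> vec_inf_norm dout (\<lambda>q. (T z q + R z q) - (That z q + R z q))
              \<le> LPhi * Rmix * lam1 * dphi + dPhi"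
      using vn claim2 by simp
  qed
qed

end
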